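(* For any aggregator $f:[0,1]^2\to[0,1]$ and any $\lambda\in(0,1]$, $$R_\lambda(f)=\sup_{\theta\in\Theta_4}\mathbb E_\theta\big[L(f(\mathbf x(\mathbf s,\lambda)),\omega)-L(f^*(\mathbf s),\omega)\big],$$ where $\Theta_4\subseteq\Theta$ is the set of conditionally independent structures in which each expert has exactly two possible signals, $\mathcal S_1=\mathcal S_2=\{r,b\}$.
   Context: Setting: a binary world state $\omega\in\{0,1\}$ and two experts. An information structure $\theta$ consists of a prior $\mu=\Pr[\omega=1]\in(0,1)$ and finite signal spaces $\mathcal S_1,\mathcal S_2$ with a joint distribution of $(\omega,S_1,S_2)$ under which $S_1,S_2$ are conditionally independent given $\omega$; $\Theta$ is the set of all such structures. For $\lambda\in(0,1]$, expert $i$ with signal $s_i$ reports $x_i(s_i,\lambda)=\frac{\mu^\lambda\Pr[S_i=s_i\mid\omega=1]}{\mu^\lambda\Pr[S_i=s_i\mid\omega=1]+(1-\mu)^\lambda\Pr[S_i=s_i\mid\omega=0]}$, and $\mathbf x(\mathbf s,\lambda)=(x_1(s_1,\lambda),x_2(s_2,\lambda))$. $f^*(\mathbf s)=\Pr_\theta[\omega=1\mid S_1=s_1,S_2=s_2]$. The loss is $L(y,\omega)=(y-\omega)^2$. The regret is $R_\lambda(f)=\sup_{\theta\in\Theta}\mathbb E_\theta[L(f(\mathbf x(\mathbf s,\lambda)),\omega)-L(f^*(\mathbf s),\omega)]$. *)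

theory Defs
  imports Complex_Main
begin

text \<open>An information structure is represented as a tuple (mu, S1, S2, P1, P2):
  mu = Pr[omega = 1]; S1, S2 are finite signal spaces (encoded as finite sets of naturals);
  Pi w s = Pr[S_i = s | omega = w] (w = True means omega = 1).
  Conditional independence is built in: the joint law is
  Pr[omega = w, S1 = s1, S2 = s2] = Pr[omega = w] * P1 w s1 * P2 w s2.\<close>

type_synonym info_struct =
  "real \<times> nat set \<times> nat set \<times> (bool \<Rightarrow> nat \<Rightarrow> real) \<times> (bool \<Rightarrow> nat \<Rightarrow> real)"

definition cond_dist :: "nat set \<Rightarrow> (bool \<Rightarrow> nat \<Rightarrow> real) \<Rightarrow> bool" where
  "cond_dist S P \<longleftrightarrow> finite S \<and> (\<forall>w. (\<forall>s\<in>S. P w s \<ge> 0) \<and> (\<Sum>s\<in>S. P w s) = 1)"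

definition is_info_struct :: "info_struct \<Rightarrow> bool" where
  "is_info_struct \<theta> = (case \<theta> of (\<mu>, S1, S2, P1, P2) \<Rightarrow>
      0 < \<mu> \<and> \<mu> < 1 \<and> cond_dist S1 P1 \<and> cond_dist S2 P2)"

text \<open>Theta: all structures.  Theta_4: both experts have signal space {r,b}, encoded {0,1}.\<close>
definition Theta :: "info_struct set" where
  "Theta = {\<theta>. is_info_struct \<theta>}"

definition Theta4 :: "info_struct set" where
  "Theta4 = {\<theta>. is_info_struct \<theta> \<and> fst (snd \<theta>) = {0,1} \<and> fst (snd (snd \<theta>)) = {0,1}}"

definition report :: "real \<Rightarrow> real \<Rightarrow> (bool \<Rightarrow> nat \<Rightarrow> real) \<Rightarrow> nat \<Rightarrow> real" where
  "report \<mu> lam P s = \<mu> powr lam * P True s /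
      (\<mu> powr lam * P True s + (1 - \<mu>) powr lam * P False s)"

definition posterior :: "real \<Rightarrow> (bool \<Rightarrow> nat \<Rightarrow> real) \<Rightarrow> (bool \<Rightarrow> nat \<Rightarrow> real) \<Rightarrow> nat \<Rightarrow> nat \<Rightarrow> real" where
  "posterior \<mu> P1 P2 s1 s2 = \<mu> * P1 True s1 * P2 True s2 /
      (\<mu> * P1 True s1 * P2 True s2 + (1 - \<mu>) * P1 False s1 * P2 False s2)"

definition sqloss :: "real \<Rightarrow> bool \<Rightarrow> real" where
  "sqloss y w = (y - (if w then 1 else 0))\<^sup>2"

definition excess_loss :: "(real \<Rightarrow> real \<Rightarrow> real) \<Rightarrow> real \<Rightarrow> info_struct \<Rightarrow> real" where
  "excess_loss f lam \<theta> = (case \<theta> of (\<mu>, S1, S2, P1, P2) \<Rightarrow>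
     \<Sum>s1\<in>S1. \<Sum>s2\<in>S2. \<Sum>w\<in>(UNIV::bool set).
       (if w then \<mu> else 1 - \<mu>) * P1 w s1 * P2 w s2 *
       (sqloss (f (report \<mu> lam P1 s1) (report \<mu> lam P2 s2)) w
        - sqloss (posterior \<mu> P1 P2 s1 s2) w))"

definition regret :: "(real \<Rightarrow> real \<Rightarrow> real) \<Rightarrow> real \<Rightarrow> real" where
  "regret f lam = (SUP \<theta>\<in>Theta. excess_loss f lam \<theta>)"

end

theory Submission
  imports Defs
begin

lemma dep3:
  fixes a1 b1 a2 b2 a3 b3 :: real
  assumes "a1 \<noteq> 0 \<or> b1 \<noteq> 0"
  shows "\<exists>e1 e2 e3. (e1 \<noteq> 0 \<or> e2 \<noteq> 0 \<or> e3 \<noteq> 0) \<and> e1*a1+e2*a2+e3*a3 = 0 \<and> e1*b1+e2*b2+e3*b3 = 0"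
proof (cases "a2*b3 - a3*b2 = 0 \<and> a3*b1 - a1*b3 = 0 \<and> a1*b2 - a2*b1 = 0")
  case True
  define k where "k = (a1*a2+b1*b2)/(a1^2+b1^2)"
  have pos: "a1^2+b1^2 \<noteq> 0" using assms by (simp add: sum_power2_eq_zero_iff)
  have i1: "(a1*a2+b1*b2)*a1 - a2*(a1^2+b1^2) = b1*(a1*b2 - a2*b1)"
    by (simp add: algebra_simps power2_eq_square)
  have i2: "(a1*a2+b1*b2)*b1 - b2*(a1^2+b1^2) = a1*(a2*b1 - a1*b2)"
    by (simp add: algebra_simps power2_eq_square)
  have z: "a1*b2 - a2*b1 = 0" "a2*b1 - a1*b2 = 0" using True by linarith+
  have "k*a1 = a2"
  proof -
    have "(a1*a2+b1*b2)*a1 = a2*(a1^2+b1^2)" using i1 z by simp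
    then have "(a1*a2+b1*b2)*a1 / (a1^2+b1^2) = a2" using pos by (simp add: divide_eq_eq)
    then show ?thesis by (simp add: k_def)
  qed
  moreover have "k*b1 = b2"
  proof -
    have "(a1*a2+b1*b2)*b1 = b2*(a1^2+b1^2)" using i2 z by simp
    then have "(a1*a2+b1*b2)*b1 / (a1^2+b1^2) = b2" using pos by (simp add: divide_eq_eq)
    then show ?thesis by (simp add: k_def)
  qed
  ultimately show ?thesis
    by (rule_tac x=k in exI, rule_tac x="-1" in exI, rule_tac x=0 in exI) simp
next
  case False
  show ?thesis
    apply (rule exI[of _ "a2*b3 - a3*b2"], rule exI[of _ "a3*b1 - a1*b3"], rule exI[of _ "a1*b2 - a2*b1"])
    using False by (simp add: algebra_simps)
qed


lemma sum_three:
  fixes x1 x2 x3 :: real and g :: "'a \<Rightarrow> real"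
  assumes "finite S" "s1 \<in> S" "s2 \<in> S" "s3 \<in> S" "s1 \<noteq> s2" "s1 \<noteq> s3" "s2 \<noteq> s3"
  shows "(\<Sum>s\<in>S. (if s = s1 then x1 else if s = s2 then x2 else if s = s3 then x3 else 0) * g s)
         = x1 * g s1 + x2 * g s2 + x3 * g s3"
proof -
  have "(\<Sum>s\<in>S. (if s = s1 then x1 else if s = s2 then x2 else if s = s3 then x3 else 0) * g s)
     = (\<Sum>s\<in>{s1,s2,s3}. (if s = s1 then x1 else if s = s2 then x2 else if s = s3 then x3 else 0) * g s)"
    by (rule sum.mono_neutral_right) (use assms in auto)
  also have "\<dots> = x1 * g s1 + x2 * g s2 + x3 * g s3" using assms by simp
  finally show ?thesis .
qed

lemma reduce_card:
  fixes H :: "real \<Rightarrow> real \<Rightarrow> real"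
  assumes hom: "\<And>t x y. 0 \<le> t \<Longrightarrow> H (t*x) (t*y) = t * H x y"
  shows "finite (S::'a set) \<Longrightarrow> (\<forall>s\<in>S. 0 \<le> a s \<and> 0 \<le> b s) \<Longrightarrow>
    \<exists>(S'::'a set) a' b'. finite S' \<and> card S' \<le> 2 \<and> (\<forall>s\<in>S'. 0 \<le> a' s \<and> 0 \<le> b' s) \<and>
      sum a' S' = sum a S \<and> sum b' S' = sum b S \<and>
      (\<Sum>s\<in>S. H (a s) (b s)) \<le> (\<Sum>s\<in>S'. H (a' s) (b' s))"
proof (induction "card S" arbitrary: S a b rule: less_induct)
  case less
  have H0: "H 0 0 = 0" using hom[of 0 0 0] by simp
  have remove: "\<exists>(S'::'a set) a' b'. finite S' \<and> card S' \<le> 2 \<and> (\<forall>s\<in>S'. 0 \<le> a' s \<and> 0 \<le> b' s) \<and>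
      sum a' S' = sum a S \<and> sum b' S' = sum b S \<and>
      (\<Sum>s\<in>S. H (a s) (b s)) \<le> (\<Sum>s\<in>S'. H (a' s) (b' s))"
    if k: "k \<in> S" "a k = 0" "b k = 0" for k
  proof -
    have lt: "card (S - {k}) < card S" using k less.prems by (metis card_Diff1_less)
    have "\<exists>(S'::'a set) a' b'. finite S' \<and> card S' \<le> 2 \<and> (\<forall>s\<in>S'. 0 \<le> a' s \<and> 0 \<le> b' s) \<and>
      sum a' S' = sum a (S-{k}) \<and> sum b' S' = sum b (S-{k}) \<and>
      (\<Sum>s\<in>S-{k}. H (a s) (b s)) \<le> (\<Sum>s\<in>S'. H (a' s) (b' s))"
      by (rule less.hyps[OF lt, of a b]) (use less.prems in auto)
    then obtain S' :: "'a set" and a' b' :: "'a \<Rightarrow> real" where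
      r: "finite S'" "card S' \<le> 2" "\<forall>s\<in>S'. 0 \<le> a' s \<and> 0 \<le> b' s"
        "sum a' S' = sum a (S - {k})" "sum b' S' = sum b (S - {k})"
        "(\<Sum>s\<in>S-{k}. H (a s) (b s)) \<le> (\<Sum>s\<in>S'. H (a' s) (b' s))" by blast
    have ea: "sum a S = sum a (S - {k})" using k less.prems by (simp add: sum.remove)
    have eb: "sum b S = sum b (S - {k})" using k less.prems by (simp add: sum.remove)
    have eH: "(\<Sum>s\<in>S. H (a s) (b s)) = (\<Sum>s\<in>S-{k}. H (a s) (b s))"
      using k less.prems H0 by (simp add: sum.remove)
    have le: "(\<Sum>s\<in>S. H (a s) (b s)) \<le> (\<Sum>s\<in>S'. H (a' s) (b' s))" using eH r(6) by simp
    show ?thesis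
      by (intro exI[of _ S'] exI[of _ a'] exI[of _ b'] conjI; (rule r(1) r(2) r(3) le)?)
         (simp_all only: r(4) r(5) ea eb)
  qed
  show ?case
  proof (cases "card S \<le> 2")
    case True
    then show ?thesis using less.prems by blast
  next
    case False
    show ?thesis
    proof (cases "\<exists>k\<in>S. a k = 0 \<and> b k = 0")
      case True
      then show ?thesis using remove by blast
    next
      case nz: False
      have "S \<noteq> {}" using False by (intro notI) simp
      then obtain s1 where s1: "s1 \<in> S" by blast
      have "card (S - {s1}) \<ge> 2" using False s1 less.prems by simp
      then have "S - {s1} \<noteq> {}" by (intro notI) simp
      then obtain s2 where s2: "s2 \<in> S - {s1}" by blast
      have "card (S - {s1} - {s2}) \<ge> 1" using False s1 s2 less.prems by simp
      then have "S - {s1} - {s2} \<noteq> {}" by (intro notI) simp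
      then obtain s3 where s3: "s3 \<in> S - {s1} - {s2}" by blast
      from s2 s3 have d: "s1 \<noteq> s2" "s1 \<noteq> s3" "s2 \<noteq> s3" "s2 \<in> S" "s3 \<in> S" by auto
      obtain e1 e2 e3 where e: "e1 \<noteq> 0 \<or> e2 \<noteq> 0 \<or> e3 \<noteq> 0"
        "e1*a s1+e2*a s2+e3*a s3 = 0" "e1*b s1+e2*b s2+e3*b s3 = 0"
        using dep3[of "a s1" "b s1" "a s2" "a s3" "b s2" "b s3"] nz s1 by blast
      define D where "D = e1 * H (a s1) (b s1) + e2 * H (a s2) (b s2) + e3 * H (a s3) (b s3)"
      obtain f1 f2 f3 where f: "f1 \<noteq> 0 \<or> f2 \<noteq> 0 \<or> f3 \<noteq> 0"
        "f1*a s1+f2*a s2+f3*a s3 = 0" "f1*b s1+f2*b s2+f3*b s3 = 0"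
        "0 \<le> f1 * H (a s1) (b s1) + f2 * H (a s2) (b s2) + f3 * H (a s3) (b s3)"
      proof (cases "0 \<le> D")
        case True then show ?thesis using that[of e1 e2 e3] e D_def by blast
      next
        case False
        show ?thesis
        proof (rule that[of "-e1" "-e2" "-e3"])
          show "- e1 \<noteq> 0 \<or> - e2 \<noteq> 0 \<or> - e3 \<noteq> 0" using e(1) by simp
          have "-e1 * a s1 + - e2 * a s2 + - e3 * a s3 = -(e1*a s1+e2*a s2+e3*a s3)" by simp
          then show "-e1 * a s1 + - e2 * a s2 + - e3 * a s3 = 0" using e(2) by simp
          have "-e1 * b s1 + - e2 * b s2 + - e3 * b s3 = -(e1*b s1+e2*b s2+e3*b s3)" by simp
          then show "-e1 * b s1 + - e2 * b s2 + - e3 * b s3 = 0" using e(3) by simp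
          have "-e1 * H (a s1) (b s1) + - e2 * H (a s2) (b s2) + - e3 * H (a s3) (b s3) = -D"
            unfolding D_def by simp
          then show "0 \<le> -e1 * H (a s1) (b s1) + - e2 * H (a s2) (b s2) + - e3 * H (a s3) (b s3)"
            using False by simp
        qed
      qed
      define m where "m = max (-f1) (max (-f2) (-f3))"
      have pos: "0 < a s + b s" if "s \<in> S" for s
      proof -
        have "0 \<le> a s" "0 \<le> b s" using that less.prems(2) by auto
        moreover have "\<not> (a s = 0 \<and> b s = 0)" using nz that by blast
        ultimately show ?thesis by linarith
      qed
      have "m > 0"
      proof (rule ccontr)
        assume "\<not> m > 0"
        then have g: "0 \<le> f1" "0 \<le> f2" "0 \<le> f3" unfolding m_def by auto
        have sum0: "f1*(a s1 + b s1) + f2*(a s2+b s2) + f3*(a s3+b s3) = 0"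
          using f by (simp add: algebra_simps)
        have p1: "0 < a s1 + b s1" "0 < a s2 + b s2" "0 < a s3 + b s3" using pos s1 d by auto
        have "f1*(a s1 + b s1) \<ge> 0" "f2*(a s2 + b s2) \<ge> 0" "f3*(a s3 + b s3) \<ge> 0"
          using g p1 by (simp_all add: mult_nonneg_nonneg)
        then have "f1*(a s1 + b s1) = 0" "f2*(a s2 + b s2) = 0" "f3*(a s3 + b s3) = 0"
          using sum0 by linarith+
        then have "f1 = 0" "f2 = 0" "f3 = 0" using p1 by simp_all
        then show False using f(1) by simp
      qed
      define ef where "ef s = (if s = s1 then f1 else if s = s2 then f2 else if s = s3 then f3 else 0)" for s
      define c where "c s = 1 + ef s / m" for s
      define a' where "a' s = c s * a s" for s
      define b' where "b' s = c s * b s" for s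
      have cnn: "0 \<le> c s" for s
      proof -
        have "-ef s \<le> m" using \<open>m > 0\<close> unfolding ef_def by (auto simp: m_def)
        then have "-1 \<le> ef s / m" using \<open>m > 0\<close> by (simp add: le_divide_eq)
        then show ?thesis unfolding c_def by linarith
      qed
      have sum_ef: "(\<Sum>s\<in>S. ef s * g s) = f1 * g s1 + f2 * g s2 + f3 * g s3" for g
        unfolding ef_def using sum_three[OF less.prems(1) s1 d(4) d(5) d(1) d(2) d(3)] .
      have sumc: "(\<Sum>s\<in>S. c s * g s) = sum g S + (f1 * g s1 + f2 * g s2 + f3 * g s3) / m" for g
      proof -
        have "(\<Sum>s\<in>S. c s * g s) = (\<Sum>s\<in>S. g s + (ef s * g s) / m)"
          unfolding c_def by (simp add: algebra_simps)
        also have "\<dots> = sum g S + (\<Sum>s\<in>S. ef s * g s) / m"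
          by (simp add: sum.distrib sum_divide_distrib)
        finally show ?thesis using sum_ef by simp
      qed
      have sa: "sum a' S = sum a S" unfolding a'_def using sumc[of a] f by simp
      have sb: "sum b' S = sum b S" unfolding b'_def using sumc[of b] f by simp
      have sH: "(\<Sum>s\<in>S. H (a s) (b s)) \<le> (\<Sum>s\<in>S. H (a' s) (b' s))"
      proof -
        have "(\<Sum>s\<in>S. H (a' s) (b' s)) = (\<Sum>s\<in>S. c s * H (a s) (b s))"
          unfolding a'_def b'_def using hom cnn by simp
        also have "\<dots> = (\<Sum>s\<in>S. H (a s) (b s)) + (f1 * H (a s1) (b s1) + f2 * H (a s2) (b s2) + f3 * H (a s3) (b s3)) / m"
          by (rule sumc)
        finally show ?thesis using f(4) \<open>m > 0\<close> by simp
      qed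
      obtain k where k: "k \<in> S" "c k = 0"
      proof -
        have "m = -f1 \<or> m = -f2 \<or> m = -f3" unfolding m_def by linarith
        then show ?thesis
        proof (elim disjE)
          assume "m = -f1" then show ?thesis using that[of s1] s1 \<open>m>0\<close> by (simp add: c_def ef_def)
        next
          assume "m = -f2" then show ?thesis using that[of s2] d \<open>m>0\<close> by (simp add: c_def ef_def)
        next
          assume "m = -f3" then show ?thesis using that[of s3] d \<open>m>0\<close> by (simp add: c_def ef_def)
        qed
      qed
      have lt: "card (S - {k}) < card S" using k less.prems by (metis card_Diff1_less)
      have "\<exists>(S'::'a set) a'' b''. finite S' \<and> card S' \<le> 2 \<and> (\<forall>s\<in>S'. 0 \<le> a'' s \<and> 0 \<le> b'' s) \<and>
        sum a'' S' = sum a' (S-{k}) \<and> sum b'' S' = sum b' (S-{k}) \<and>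
        (\<Sum>s\<in>S-{k}. H (a' s) (b' s)) \<le> (\<Sum>s\<in>S'. H (a'' s) (b'' s))"
        by (rule less.hyps[OF lt, of a' b']) (use less.prems cnn in \<open>auto simp: a'_def b'_def\<close>)
      then obtain S' :: "'a set" and a'' b'' :: "'a \<Rightarrow> real" where
        r: "finite S'" "card S' \<le> 2" "\<forall>s\<in>S'. 0 \<le> a'' s \<and> 0 \<le> b'' s"
          "sum a'' S' = sum a' (S - {k})" "sum b'' S' = sum b' (S - {k})"
          "(\<Sum>s\<in>S-{k}. H (a' s) (b' s)) \<le> (\<Sum>s\<in>S'. H (a'' s) (b'' s))"
        by blast
      have "sum a' S = sum a' (S - {k})" using k less.prems by (simp add: sum.remove a'_def)
      moreover have "sum b' S = sum b' (S - {k})" using k less.prems by (simp add: sum.remove b'_def)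
      moreover have "(\<Sum>s\<in>S. H (a' s) (b' s)) = (\<Sum>s\<in>S-{k}. H (a' s) (b' s))"
        using k less.prems H0 by (simp add: sum.remove a'_def b'_def)
      ultimately have ea: "sum a S = sum a' (S - {k})" and eb: "sum b S = sum b' (S - {k})"
        and le: "(\<Sum>s\<in>S. H (a s) (b s)) \<le> (\<Sum>s\<in>S'. H (a'' s) (b'' s))"
        using sa sb sH r(6) by simp_all
      show ?thesis
        by (intro exI[of _ S'] exI[of _ a''] exI[of _ b''] conjI; (rule r(1) r(2) r(3) le)?)
           (simp_all only: r(4) r(5) ea eb)
    qed
  qed
qed

lemma reduce01:
  fixes H :: "real \<Rightarrow> real \<Rightarrow> real" and S :: "nat set"
  assumes hom: "\<And>t x y. 0 \<le> t \<Longrightarrow> H (t*x) (t*y) = t * H x y"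
    and fin: "finite S" and nn: "\<forall>s\<in>S. 0 \<le> a s \<and> 0 \<le> b s"
  shows "\<exists>(a'::nat\<Rightarrow>real) (b'::nat\<Rightarrow>real). (\<forall>n\<in>{0,1}. 0 \<le> a' n \<and> 0 \<le> b' n) \<and> a' 0 + a' 1 = sum a S \<and> b' 0 + b' 1 = sum b S \<and>
     (\<Sum>s\<in>S. H (a s) (b s)) \<le> H (a' 0) (b' 0) + H (a' 1) (b' 1)"
proof -
  have H0: "H 0 0 = 0" using hom[of 0 0 0] by simp
  obtain S' :: "nat set" and a' b' :: "nat \<Rightarrow> real" where r: "finite S'" "card S' \<le> 2" "\<forall>s\<in>S'. 0 \<le> a' s \<and> 0 \<le> b' s"
      "sum a' S' = sum a S" "sum b' S' = sum b S"
      "(\<Sum>s\<in>S. H (a s) (b s)) \<le> (\<Sum>s\<in>S'. H (a' s) (b' s))"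
    using reduce_card[of H S a b, OF hom fin nn] by blast
  have "card S' = 0 \<or> card S' = 1 \<or> card S' = 2" using r(2) by linarith
  then show ?thesis
  proof (elim disjE)
    assume "card S' = 0"
    then have e: "S' = {}" using r(1) by simp
    have 1: "(0::real) + 0 = sum a S" using r(4) e by simp
    have 2: "(0::real) + 0 = sum b S" using r(5) e by simp
    have 3: "(\<Sum>s\<in>S. H (a s) (b s)) \<le> H 0 0 + H 0 0" using r(6) e H0 by simp
    show ?thesis
      by (rule exI[of _ "\<lambda>_. 0"], rule exI[of _ "\<lambda>_. 0"]) (use 1 2 3 in simp)
  next
    assume "card S' = 1"
    then obtain p where p: "S' = {p}" by (auto simp: card_Suc_eq)
    have 1: "a' p + 0 = sum a S" using r(4) p by simp
    have 2: "b' p + 0 = sum b S" using r(5) p by simp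
    have 3: "(\<Sum>s\<in>S. H (a s) (b s)) \<le> H (a' p) (b' p) + H 0 0" using r(6) p H0 by simp
    have 4: "0 \<le> a' p" "0 \<le> b' p" using r(3) p by simp_all
    show ?thesis
      by (rule exI[of _ "\<lambda>n. if n = 0 then a' p else 0"], rule exI[of _ "\<lambda>n. if n = 0 then b' p else 0"])
         (use 1 2 3 4 in simp)
  next
    assume "card S' = 2"
    then obtain p q where p: "S' = {p,q}" "p \<noteq> q" by (auto simp: card_2_iff)
    have 1: "a' p + a' q = sum a S" using r(4) p by simp
    have 2: "b' p + b' q = sum b S" using r(5) p by simp
    have 3: "(\<Sum>s\<in>S. H (a s) (b s)) \<le> H (a' p) (b' p) + H (a' q) (b' q)" using r(6) p by simp
    have 4: "0 \<le> a' p" "0 \<le> b' p" "0 \<le> a' q" "0 \<le> b' q" using r(3) p by simp_all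
    show ?thesis
      by (rule exI[of _ "\<lambda>n. if n = 0 then a' p else a' q"], rule exI[of _ "\<lambda>n. if n = 0 then b' p else b' q"])
         (use 1 2 3 4 in simp)
  qed
qed

definition H1 :: "(real \<Rightarrow> real \<Rightarrow> real) \<Rightarrow> real \<Rightarrow> real \<Rightarrow> nat set \<Rightarrow> (bool \<Rightarrow> nat \<Rightarrow> real) \<Rightarrow> real \<Rightarrow> real \<Rightarrow> real" where
  "H1 f lam \<mu> S2 P2 x y = excess_loss f lam (\<mu>, {0::nat}, S2, (\<lambda>w _. if w then x else y), P2)"

definition H2 :: "(real \<Rightarrow> real \<Rightarrow> real) \<Rightarrow> real \<Rightarrow> real \<Rightarrow> nat set \<Rightarrow> (bool \<Rightarrow> nat \<Rightarrow> real) \<Rightarrow> real \<Rightarrow> real \<Rightarrow> real" where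
  "H2 f lam \<mu> S1 P1 x y = excess_loss f lam (\<mu>, S1, {0::nat}, P1, (\<lambda>w _. if w then x else y))"

lemma excess_H1:
  "excess_loss f lam (\<mu>, S1, S2, P1, P2) = (\<Sum>s1\<in>S1. H1 f lam \<mu> S2 P2 (P1 True s1) (P1 False s1))"
  by (simp add: H1_def excess_loss_def report_def posterior_def UNIV_bool)

lemma excess_H2:
  "excess_loss f lam (\<mu>, S1, S2, P1, P2) = (\<Sum>s2\<in>S2. H2 f lam \<mu> S1 P1 (P2 True s2) (P2 False s2))"
  unfolding H2_def excess_loss_def
  by (simp add: report_def posterior_def UNIV_bool sum.swap[of _ S1 S2])

lemma frac_scale: "(t::real) > 0 \<Longrightarrow> (A * (t*x)) / (A*(t*x) + B*(t*y)) = (A*x)/(A*x+B*y)"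
proof -
  assume t: "t > 0"
  have "(A * (t*x)) / (A*(t*x) + B*(t*y)) = (t*(A*x)) / (t*(A*x+B*y))" by (simp add: algebra_simps)
  also have "\<dots> = (A*x)/(A*x+B*y)" using t by simp
  finally show ?thesis .
qed

lemma frac_scale2: "(t::real) > 0 \<Longrightarrow> (A * (t*x) * C) / (A*(t*x)*C + B*(t*y)*D) = (A*x*C)/(A*x*C+B*y*D)"
proof -
  assume t: "t > 0"
  have "(A * (t*x) * C) / (A*(t*x)*C + B*(t*y)*D) = (t*(A*x*C)) / (t*(A*x*C+B*y*D))" by (simp add: algebra_simps)
  also have "\<dots> = (A*x*C)/(A*x*C+B*y*D)" using t by simp
  finally show ?thesis .
qed

lemma frac_scale3: "(t::real) > 0 \<Longrightarrow> (A * C * (t*x)) / (A*C*(t*x) + B*D*(t*y)) = (A*C*x)/(A*C*x+B*D*y)"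
proof -
  assume t: "t > 0"
  have "(A * C * (t*x)) / (A*C*(t*x) + B*D*(t*y)) = (t*(A*C*x)) / (t*(A*C*x+B*D*y))" by (simp add: algebra_simps)
  also have "\<dots> = (A*C*x)/(A*C*x+B*D*y)" using t by simp
  finally show ?thesis .
qed

lemma H1_hom: "0 \<le> t \<Longrightarrow> H1 f lam \<mu> S2 P2 (t*x) (t*y) = t * H1 f lam \<mu> S2 P2 x y"
proof (cases "t = 0")
  case True then show ?thesis by (simp add: H1_def excess_loss_def)
next
  case False
  assume "0 \<le> t" then have t: "t > 0" using False by simp
  have r: "report \<mu> lam (\<lambda>w _. if w then t*x else t*y) m = report \<mu> lam (\<lambda>w _. if w then x else y) m" for m
    by (simp add: report_def frac_scale[OF t])
  have p: "posterior \<mu> (\<lambda>w _. if w then t*x else t*y) P2 m k = posterior \<mu> (\<lambda>w _. if w then x else y) P2 m k" for m k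
    by (simp add: posterior_def frac_scale2[OF t])
  have "excess_loss f lam (\<mu>, {0::nat}, S2, (\<lambda>w _. if w then t*x else t*y), P2) = t * excess_loss f lam (\<mu>, {0::nat}, S2, (\<lambda>w _. if w then x else y), P2)"
    unfolding excess_loss_def prod.case r p
    by (simp add: UNIV_bool sum_distrib_left algebra_simps)
  then show ?thesis by (simp add: H1_def)
qed

lemma H2_hom: "0 \<le> t \<Longrightarrow> H2 f lam \<mu> S1 P1 (t*x) (t*y) = t * H2 f lam \<mu> S1 P1 x y"
proof (cases "t = 0")
  case True then show ?thesis by (simp add: H2_def excess_loss_def)
next
  case False
  assume "0 \<le> t" then have t: "t > 0" using False by simp
  have r: "report \<mu> lam (\<lambda>w _. if w then t*x else t*y) m = report \<mu> lam (\<lambda>w _. if w then x else y) m" for m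
    by (simp add: report_def frac_scale[OF t])
  have p: "posterior \<mu> P1 (\<lambda>w _. if w then t*x else t*y) m k = posterior \<mu> P1 (\<lambda>w _. if w then x else y) m k" for m k
    by (simp add: posterior_def frac_scale3[OF t])
  have "excess_loss f lam (\<mu>, S1, {0::nat}, P1, (\<lambda>w _. if w then t*x else t*y)) = t * excess_loss f lam (\<mu>, S1, {0::nat}, P1, (\<lambda>w _. if w then x else y))"
    unfolding excess_loss_def prod.case r p
    by (simp add: UNIV_bool sum_distrib_left algebra_simps)
  then show ?thesis by (simp add: H2_def)
qed

lemma step1:
  assumes "is_info_struct (\<mu>, S1, S2, P1, P2)"
  shows "\<exists>Q1. is_info_struct (\<mu>, {0,1}, S2, Q1, P2) \<and>
     excess_loss f lam (\<mu>, S1, S2, P1, P2) \<le> excess_loss f lam (\<mu>, {0,1}, S2, Q1, P2)"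
proof -
  from assms have fin: "finite S1" and nn: "\<forall>s\<in>S1. 0 \<le> P1 True s \<and> 0 \<le> P1 False s"
    and s1: "sum (P1 True) S1 = 1" "sum (P1 False) S1 = 1"
    by (auto simp: is_info_struct_def cond_dist_def)
  obtain a' b' :: "nat \<Rightarrow> real" where r: "\<forall>n\<in>{0,1}. 0 \<le> a' n \<and> 0 \<le> b' n" "a' 0 + a' 1 = sum (P1 True) S1"
     "b' 0 + b' 1 = sum (P1 False) S1"
     "(\<Sum>s\<in>S1. H1 f lam \<mu> S2 P2 (P1 True s) (P1 False s)) \<le> H1 f lam \<mu> S2 P2 (a' 0) (b' 0) + H1 f lam \<mu> S2 P2 (a' 1) (b' 1)"
    using reduce01[of "H1 f lam \<mu> S2 P2" S1 "P1 True" "P1 False", OF H1_hom fin nn] by blast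
  define Q1 where "Q1 w n = (if w then a' n else b' n)" for w n
  have "cond_dist {0,1} Q1" unfolding cond_dist_def Q1_def using r s1 by auto
  then have "is_info_struct (\<mu>, {0,1}, S2, Q1, P2)" using assms by (simp add: is_info_struct_def)
  moreover have "excess_loss f lam (\<mu>, S1, S2, P1, P2) \<le> excess_loss f lam (\<mu>, {0,1}, S2, Q1, P2)"
    unfolding excess_H1[of f lam \<mu> S1] excess_H1[of f lam \<mu> "{0,1}"] using r(4) by (simp add: Q1_def)
  ultimately have "is_info_struct (\<mu>, {0,1}, S2, Q1, P2) \<and>
     excess_loss f lam (\<mu>, S1, S2, P1, P2) \<le> excess_loss f lam (\<mu>, {0,1}, S2, Q1, P2)" by (rule conjI)
  then show ?thesis by (rule exI[of _ Q1])
qed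

lemma step2:
  assumes "is_info_struct (\<mu>, S1, S2, P1, P2)"
  shows "\<exists>Q2. is_info_struct (\<mu>, S1, {0,1}, P1, Q2) \<and>
     excess_loss f lam (\<mu>, S1, S2, P1, P2) \<le> excess_loss f lam (\<mu>, S1, {0,1}, P1, Q2)"
proof -
  from assms have fin: "finite S2" and nn: "\<forall>s\<in>S2. 0 \<le> P2 True s \<and> 0 \<le> P2 False s"
    and s1: "sum (P2 True) S2 = 1" "sum (P2 False) S2 = 1"
    by (auto simp: is_info_struct_def cond_dist_def)
  obtain a' b' :: "nat \<Rightarrow> real" where r: "\<forall>n\<in>{0,1}. 0 \<le> a' n \<and> 0 \<le> b' n" "a' 0 + a' 1 = sum (P2 True) S2"
     "b' 0 + b' 1 = sum (P2 False) S2"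
     "(\<Sum>s\<in>S2. H2 f lam \<mu> S1 P1 (P2 True s) (P2 False s)) \<le> H2 f lam \<mu> S1 P1 (a' 0) (b' 0) + H2 f lam \<mu> S1 P1 (a' 1) (b' 1)"
    using reduce01[of "H2 f lam \<mu> S1 P1" S2 "P2 True" "P2 False", OF H2_hom fin nn] by blast
  define Q2 where "Q2 w n = (if w then a' n else b' n)" for w n
  have "cond_dist {0,1} Q2" unfolding cond_dist_def Q2_def using r s1 by auto
  then have "is_info_struct (\<mu>, S1, {0,1}, P1, Q2)" using assms by (simp add: is_info_struct_def)
  moreover have "excess_loss f lam (\<mu>, S1, S2, P1, P2) \<le> excess_loss f lam (\<mu>, S1, {0,1}, P1, Q2)"
    unfolding excess_H2[of f lam \<mu> S1 S2] excess_H2[of f lam \<mu> S1 "{0,1}"] using r(4) by (simp add: Q2_def)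
  ultimately have "is_info_struct (\<mu>, S1, {0,1}, P1, Q2) \<and>
     excess_loss f lam (\<mu>, S1, S2, P1, P2) \<le> excess_loss f lam (\<mu>, S1, {0,1}, P1, Q2)" by (rule conjI)
  then show ?thesis by (rule exI[of _ Q2])
qed

lemma dominate:
  assumes "\<theta> \<in> Theta"
  shows "\<exists>\<theta>'\<in>Theta4. excess_loss f lam \<theta> \<le> excess_loss f lam \<theta>'"
proof -
  obtain \<mu> S1 S2 P1 P2 where th: "\<theta> = (\<mu>, S1, S2, P1, P2)" by (cases \<theta>) auto
  have "is_info_struct (\<mu>, S1, S2, P1, P2)" using assms th by (simp add: Theta_def)
  then obtain Q1 where q1: "is_info_struct (\<mu>, {0,1}, S2, Q1, P2)"
     "excess_loss f lam (\<mu>, S1, S2, P1, P2) \<le> excess_loss f lam (\<mu>, {0,1}, S2, Q1, P2)"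
    using step1 by blast
  then obtain Q2 where q2: "is_info_struct (\<mu>, {0,1}, {0,1}, Q1, Q2)"
     "excess_loss f lam (\<mu>, {0,1}, S2, Q1, P2) \<le> excess_loss f lam (\<mu>, {0,1}, {0,1}, Q1, Q2)"
    using step2 by blast
  have mem: "(\<mu>, {0,1}, {0,1}, Q1, Q2) \<in> Theta4" using q2 by (simp add: Theta4_def)
  have le: "excess_loss f lam \<theta> \<le> excess_loss f lam (\<mu>, {0,1}, {0,1}, Q1, Q2)"
    unfolding th by (rule order_trans[OF q1(2) q2(2)])
  show ?thesis by (rule bexI[of "\<lambda>t. excess_loss f lam \<theta> \<le> excess_loss f lam t", OF le mem])
qed

theorem mainTheorem2:
  fixes f :: "real \<Rightarrow> real \<Rightarrow> real" and lam :: real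
  assumes "\<forall>x\<in>{0..1}. \<forall>y\<in>{0..1}. f x y \<in> {0..1}"
    and "0 < lam" and "lam \<le> 1"
  shows "regret f lam = (SUP \<theta>\<in>Theta4. excess_loss f lam \<theta>)"
proof -
  have sub: "Theta4 \<subseteq> Theta" by (auto simp: Theta_def Theta4_def)
  have "(\<lambda>z. \<forall>x\<in>excess_loss f lam ` Theta. x \<le> z) = (\<lambda>z. \<forall>x\<in>excess_loss f lam ` Theta4. x \<le> z)"
  proof (rule ext, rule iffI)
    fix z assume "\<forall>x\<in>excess_loss f lam ` Theta. x \<le> z"
    then show "\<forall>x\<in>excess_loss f lam ` Theta4. x \<le> z" using sub by auto
  next
    fix z assume z: "\<forall>x\<in>excess_loss f lam ` Theta4. x \<le> z"
    show "\<forall>x\<in>excess_loss f lam ` Theta. x \<le> z"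
    proof
      fix x assume "x \<in> excess_loss f lam ` Theta"
      then obtain \<theta> where "\<theta> \<in> Theta" "x = excess_loss f lam \<theta>" by auto
      then show "x \<le> z" using dominate[of \<theta> f lam] z by force
    qed
  qed
  then show ?thesis unfolding regret_def Sup_real_def by simp
qed

end
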